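(* Let $(\mathcal{B},\|\cdot\|)$ be a Banach algebra with unity $e$ and let $U\subset\mathbb{R}^d$ be open. Assume $A,X:U\to\mathcal{B}$ are $C^s$-maps, $s\in\mathbb{N}_0$, and $A^{-1}(\lambda)$ exists for all $\lambda\in U$. Suppose there exist constants $\epsilon>0$, $M\ge1$, $C\ge1$ with $\|\partial^\beta A^{-1}(\lambda)\|\le MC^{|\beta|_1}$ and $\|\partial^\beta X(\lambda)\|\le\epsilon C^{|\beta|_1}$ for all $\lambda\in U$, $0\le|\beta|_1\le s$, and $\epsilon M\le\frac12$. Then $(A+X)(\lambda)$ is invertible in $\mathcal{B}$ for all $\lambda\in U$ and $$\|\partial^\beta(A+X)^{-1}(\lambda)\|\le2\Big(\sum_{k=1}^{|\beta|_1+1}k^{|\beta|_1}\|e\|^k\Big)M(2C)^{|\beta|_1}\quad\text{for }\lambda\in U,\ 0\le|\beta|_1\le s.$$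
   Context: $\beta\in\mathbb{N}_0^d$ is a multi-index, $|\beta|_1=\sum_i\beta_i$, $\partial^\beta$ the corresponding partial derivative. *)

theory Defs
  imports "HOL-Analysis.Analysis"
begin

definition invertible_elem :: "'a::ring_1 \<Rightarrow> bool" where
  "invertible_elem a \<longleftrightarrow> (\<exists>b. a * b = 1 \<and> b * a = 1)"

definition ainv :: "'a::ring_1 \<Rightarrow> 'a" where
  "ainv a = (THE b. a * b = 1 \<and> b * a = 1)"

definition partial_i :: "'n::finite \<Rightarrow> (real^'n \<Rightarrow> 'b::real_normed_vector) \<Rightarrow> real^'n \<Rightarrow> 'b" where
  "partial_i i f x = vector_derivative (\<lambda>t. f (x + t *\<^sub>R axis i 1)) (at 0)"

fun dlist :: "'n::finite list \<Rightarrow> (real^'n \<Rightarrow> 'b::real_normed_vector) \<Rightarrow> real^'n \<Rightarrow> 'b" where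
  "dlist [] f = f"
| "dlist (i # is) f = partial_i i (dlist is f)"

definition coord_list :: "'n::finite list" where
  "coord_list = (SOME xs. distinct xs \<and> set xs = UNIV)"

definition mpartial :: "('n::finite \<Rightarrow> nat) \<Rightarrow> (real^'n \<Rightarrow> 'b::real_normed_vector) \<Rightarrow> real^'n \<Rightarrow> 'b" where
  "mpartial \<beta> f = dlist (concat (map (\<lambda>i. replicate (\<beta> i) i) coord_list)) f"

definition mi_order :: "('n::finite \<Rightarrow> nat) \<Rightarrow> nat" where
  "mi_order \<beta> = (\<Sum>i\<in>UNIV. \<beta> i)"

definition Cs_on :: "nat \<Rightarrow> (real^'n::finite) set \<Rightarrow> (real^'n \<Rightarrow> 'b::real_normed_vector) \<Rightarrow> bool" where
  "Cs_on s U f \<longleftrightarrow>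
     (\<forall>is. length is \<le> s \<longrightarrow> continuous_on U (dlist is f)) \<and>
     (\<forall>is i. length is < s \<longrightarrow>
        (\<forall>x\<in>U. (\<lambda>t. dlist is f (x + t *\<^sub>R axis i 1)) differentiable (at 0)))"

end

theory Submission
  imports Defs "HOL-Library.Sublist"
begin

lemma ainv_eq:
  fixes a b :: "'a::ring_1"
  assumes "a * b = 1" "b * a = 1"
  shows "ainv a = b"
  unfolding ainv_def
proof (rule the_equality)
  show "a * b = 1 \<and> b * a = 1" using assms by simp
  fix c assume c: "a * c = 1 \<and> c * a = 1"
  have "c = c * (a * b)" using assms by simp
  also have "\<dots> = (c * a) * b" by (simp add: mult.assoc)
  also have "\<dots> = b" using c by simp
  finally show "c = b" .
qed

lemma ainv_props:
  fixes a :: "'a::ring_1"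
  assumes "invertible_elem a"
  shows "a * ainv a = 1" "ainv a * a = 1"
proof -
  obtain b where "a * b = 1" "b * a = 1" using assms unfolding invertible_elem_def by blast
  then have "ainv a = b" by (rule ainv_eq)
  then show "a * ainv a = 1" "ainv a * a = 1" using \<open>a * b = 1\<close> \<open>b * a = 1\<close> by simp_all
qed

lemma norm_power_Suc_le:
  fixes w :: "'a::{real_normed_algebra,real_algebra_1}"
  shows "norm (w ^ Suc n) \<le> norm w ^ Suc n"
proof (induction n)
  case 0 then show ?case by simp
next
  case (Suc n)
  have "norm (w ^ Suc (Suc n)) = norm (w * w ^ Suc n)" by simp
  also have "\<dots> \<le> norm w * norm (w ^ Suc n)" by (rule norm_mult_ineq)
  also have "\<dots> \<le> norm w * norm w ^ Suc n" using Suc by (simp add: mult_left_mono)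
  finally show ?case by simp
qed

lemma neumann_invertible:
  fixes u :: "'a::{real_normed_algebra, real_algebra_1, banach}"
  assumes "norm u < 1"
  shows "invertible_elem (1 + u)"
proof -
  define w where "w = - u"
  have nw: "norm w < 1" using assms by (simp add: w_def)
  have "summable (\<lambda>n. norm w ^ Suc n)" using nw
    by (simp add: summable_geometric)
  then have "summable (\<lambda>n. w ^ Suc n)"
    by (rule summable_comparison_test'[where N=0]) (metis norm_power_Suc_le power_Suc)
  then have sw: "summable (\<lambda>n. w ^ n)" using summable_Suc_iff[of "\<lambda>n. w ^ n"] by simp
  define S where "S = (\<Sum>n. w ^ n)"
  have h1: "w * S = S - 1"
  proof -
    have "w * S = (\<Sum>n. w * w ^ n)" unfolding S_def using suminf_mult[OF sw] by simp
    also have "\<dots> = (\<Sum>n. w ^ Suc n)" by simp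
    also have "\<dots> = S - 1" unfolding S_def using suminf_split_head[OF sw] by simp
    finally show ?thesis .
  qed
  have h2: "S * w = S - 1"
  proof -
    have "S * w = (\<Sum>n. w ^ n * w)" unfolding S_def using suminf_mult2[OF sw] by simp
    also have "\<dots> = (\<Sum>n. w ^ Suc n)" by (simp add: power_commutes)
    also have "\<dots> = S - 1" unfolding S_def using suminf_split_head[OF sw] by simp
    finally show ?thesis .
  qed
  have "(1 + u) * S = 1" using h1 by (simp add: w_def algebra_simps)
  moreover have "S * (1 + u) = 1" using h2 by (simp add: w_def algebra_simps)
  ultimately show ?thesis unfolding invertible_elem_def by blast
qed

lemma ev_line:
  fixes x :: "real^'n::finite"
  assumes "open U" "x \<in> U"
  shows "eventually (\<lambda>t::real. x + t *\<^sub>R axis i 1 \<in> U) (nhds 0)"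
proof -
  obtain e where e: "e > 0" "ball x e \<subseteq> U" using assms open_contains_ball by blast
  show ?thesis unfolding eventually_nhds_metric
  proof (intro exI[of _ e] conjI allI impI)
    fix t :: real assume "dist t 0 < e"
    then have "dist x (x + t *\<^sub>R axis i 1) < e"
      by (simp add: dist_norm)
    then show "x + t *\<^sub>R axis i 1 \<in> U" using e by auto
  qed (use e in auto)
qed

lemma partial_local:
  assumes "open U" "\<forall>z\<in>U. f z = g z" "x \<in> U"
  shows "partial_i i f x = partial_i i g x"
  unfolding partial_i_def
  apply (rule vector_derivative_cong_eq)
  using ev_line[OF assms(1,3), of i] assms(2) by (auto elim: eventually_mono)

lemma dlist_local:
  fixes f g :: "real^'n::finite \<Rightarrow> 'b::real_normed_vector" and "is" :: "'n list"
  assumes "open U" "\<forall>z\<in>U. f z = g z"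
  shows "\<forall>z\<in>U. dlist is f z = dlist is g z"
proof (induction "is")
  case Nil then show ?case using assms by simp
next
  case (Cons i "is")
  then show ?case using partial_local[OF assms(1) Cons] by simp
qed

lemma dlist_append: "dlist (xs @ ys) f = dlist xs (dlist ys f)"
  by (induction xs) auto

definition dk :: "nat \<Rightarrow> (real^'n::finite) set \<Rightarrow> (real^'n \<Rightarrow> 'b::real_normed_vector) \<Rightarrow> bool" where
  "dk k U f \<longleftrightarrow> (\<forall>is i. length is < k \<longrightarrow>
      (\<forall>x\<in>U. (\<lambda>t. dlist is f (x + t *\<^sub>R axis i 1)) differentiable (at 0)))"

lemma line_transfer:
  assumes "open U" "y \<in> U" "\<forall>z\<in>U. \<phi> z = P z"
    and "((\<lambda>t. P (y + t *\<^sub>R axis i 1)) has_vector_derivative D) (at 0)"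
  shows "partial_i i \<phi> y = D" "((\<lambda>t. \<phi> (y + t *\<^sub>R axis i 1)) has_vector_derivative D) (at 0)"
proof -
  have ev: "eventually (\<lambda>t. t \<in> UNIV \<longrightarrow> \<phi> (y + t *\<^sub>R axis i 1) = P (y + t *\<^sub>R axis i 1)) (nhds 0)"
    using ev_line[OF assms(1,2), of i] assms(3) by (auto elim: eventually_mono)
  have "\<phi> (y + 0 *\<^sub>R axis i 1) = P (y + 0 *\<^sub>R axis i 1)" using assms(2,3) by simp
  from has_vector_derivative_cong_ev[OF ev this]
  show h: "((\<lambda>t. \<phi> (y + t *\<^sub>R axis i 1)) has_vector_derivative D) (at 0)" using assms(4) by simp
  show "partial_i i \<phi> y = D" unfolding partial_i_def using vector_derivative_at[OF h] .
qed

lemma dk_line: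
  fixes f :: "real^'n::finite \<Rightarrow> 'b::real_normed_vector"
  assumes "dk k U f" "length is < k" "x \<in> U"
  shows "((\<lambda>t. dlist is f (x + t *\<^sub>R axis i 1)) has_vector_derivative dlist (i # is) f x) (at 0)"
proof -
  have "(\<lambda>t. dlist is f (x + t *\<^sub>R axis i 1)) differentiable (at 0)"
    using assms unfolding dk_def by blast
  then show ?thesis unfolding vector_derivative_works by (simp add: partial_i_def)
qed

lemma dk_local:
  fixes f g :: "real^'n::finite \<Rightarrow> 'b::real_normed_vector"
  assumes "open U" "\<forall>z\<in>U. f z = g z" "dk k U f"
  shows "dk k U g"
  unfolding dk_def
proof (intro allI impI ballI)
  fix "is" :: "'n list" and i x assume l: "length is < k" and x: "x \<in> U"
  have "\<forall>z\<in>U. dlist is g z = dlist is f z" using dlist_local[OF assms(1), of g f] assms(2) by simp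
  from line_transfer(2)[OF assms(1) x this dk_line[OF assms(3) l x]]
  show "(\<lambda>t. dlist is g (x + t *\<^sub>R axis i 1)) differentiable at 0" by (rule differentiableI_vector)
qed

lemma dk_mono: "dk k' U f \<Longrightarrow> k \<le> k' \<Longrightarrow> dk k U f"
  unfolding dk_def by auto

lemma dk_Suc:
  fixes f :: "real^'n::finite \<Rightarrow> 'b::real_normed_vector"
  shows "dk (Suc k) U f \<longleftrightarrow>
     (\<forall>i. \<forall>x\<in>U. (\<lambda>t. f (x + t *\<^sub>R axis i 1)) differentiable (at 0)) \<and> (\<forall>j. dk k U (partial_i j f))"
proof
  assume h: "dk (Suc k) U f"
  have "\<forall>i. \<forall>x\<in>U. (\<lambda>t. f (x + t *\<^sub>R axis i 1)) differentiable (at 0)"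
    using h unfolding dk_def by (metis dlist.simps(1) list.size(3) zero_less_Suc)
  moreover have "dk k U (partial_i j f)" for j
    unfolding dk_def
  proof (intro allI impI ballI)
    fix "is" :: "'n list" and i x assume "length is < k" "x \<in> U"
    then have "(\<lambda>t. dlist (is @ [j]) f (x + t *\<^sub>R axis i 1)) differentiable at 0"
      using h unfolding dk_def by simp
    then show "(\<lambda>t. dlist is (partial_i j f) (x + t *\<^sub>R axis i 1)) differentiable at 0"
      by (simp add: dlist_append)
  qed
  ultimately show "(\<forall>i. \<forall>x\<in>U. (\<lambda>t. f (x + t *\<^sub>R axis i 1)) differentiable (at 0)) \<and> (\<forall>j. dk k U (partial_i j f))"
    by blast
next
  assume h: "(\<forall>i. \<forall>x\<in>U. (\<lambda>t. f (x + t *\<^sub>R axis i 1)) differentiable (at 0)) \<and> (\<forall>j. dk k U (partial_i j f))"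
  show "dk (Suc k) U f" unfolding dk_def
  proof (intro allI impI ballI)
    fix "is" :: "'n list" and i x assume l: "length is < Suc k" and x: "x \<in> U"
    show "(\<lambda>t. dlist is f (x + t *\<^sub>R axis i 1)) differentiable at 0"
    proof (cases "is" rule: rev_exhaust)
      case Nil then show ?thesis using h x by simp
    next
      case (snoc ys j)
      then have "length ys < k" using l by simp
      then have "(\<lambda>t. dlist ys (partial_i j f) (x + t *\<^sub>R axis i 1)) differentiable at 0"
        using h x unfolding dk_def by blast
      then show ?thesis using snoc by (simp add: dlist_append)
    qed
  qed
qed

lemma dk_add:
  fixes f g :: "real^'n::finite \<Rightarrow> 'b::real_normed_vector"
  assumes "open U" "dk k U f" "dk k U g"
  shows "\<forall>xs. length xs \<le> k \<longrightarrow> (\<forall>y\<in>U. dlist xs (\<lambda>x. f x + g x) y = dlist xs f y + dlist xs g y)"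
    and "dk k U (\<lambda>x. f x + g x)"
proof -
  show eq: "\<forall>xs. length xs \<le> k \<longrightarrow> (\<forall>y\<in>U. dlist xs (\<lambda>x. f x + g x) y = dlist xs f y + dlist xs g y)"
  proof (intro allI)
    fix xs :: "'n list"
    show "length xs \<le> k \<longrightarrow> (\<forall>y\<in>U. dlist xs (\<lambda>x. f x + g x) y = dlist xs f y + dlist xs g y)"
    proof (induction xs)
      case Nil then show ?case by simp
    next
      case (Cons i xs)
      show ?case
      proof (intro impI ballI)
        fix y assume l: "length (i # xs) \<le> k" and y: "y \<in> U"
        then have l': "length xs < k" by simp
        have "((\<lambda>t. dlist xs f (y + t *\<^sub>R axis i 1) + dlist xs g (y + t *\<^sub>R axis i 1))
               has_vector_derivative (dlist (i#xs) f y + dlist (i#xs) g y)) (at 0)"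
          by (intro has_vector_derivative_add dk_line[OF assms(2) l' y] dk_line[OF assms(3) l' y])
        from line_transfer(1)[OF assms(1) y _ this, of "dlist xs (\<lambda>x. f x + g x)"]
        show "dlist (i # xs) (\<lambda>x. f x + g x) y = dlist (i # xs) f y + dlist (i # xs) g y"
          using Cons l' by simp
      qed
    qed
  qed
  show "dk k U (\<lambda>x. f x + g x)" unfolding dk_def
  proof (intro allI impI ballI)
    fix "is" :: "'n list" and i x assume l: "length is < k" and x: "x \<in> U"
    have "((\<lambda>t. dlist is f (x + t *\<^sub>R axis i 1) + dlist is g (x + t *\<^sub>R axis i 1))
               has_vector_derivative (dlist (i#is) f x + dlist (i#is) g x)) (at 0)"
      by (intro has_vector_derivative_add dk_line[OF assms(2) l x] dk_line[OF assms(3) l x])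
    from line_transfer(2)[OF assms(1) x _ this, of "dlist is (\<lambda>x. f x + g x)"]
    show "(\<lambda>t. dlist is (\<lambda>x. f x + g x) (x + t *\<^sub>R axis i 1)) differentiable at 0"
      using eq l by (auto intro: differentiableI_vector)
  qed
qed

lemma dk_minus:
  fixes f :: "real^'n::finite \<Rightarrow> 'b::real_normed_vector"
  assumes "open U" "dk k U f"
  shows "\<forall>xs. length xs \<le> k \<longrightarrow> (\<forall>y\<in>U. dlist xs (\<lambda>x. - f x) y = - dlist xs f y)"
    and "dk k U (\<lambda>x. - f x)"
proof -
  show eq: "\<forall>xs. length xs \<le> k \<longrightarrow> (\<forall>y\<in>U. dlist xs (\<lambda>x. - f x) y = - dlist xs f y)"
  proof (intro allI)
    fix xs :: "'n list"
    show "length xs \<le> k \<longrightarrow> (\<forall>y\<in>U. dlist xs (\<lambda>x. - f x) y = - dlist xs f y)"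
    proof (induction xs)
      case Nil then show ?case by simp
    next
      case (Cons i xs)
      show ?case
      proof (intro impI ballI)
        fix y assume l: "length (i # xs) \<le> k" and y: "y \<in> U"
        then have l': "length xs < k" by simp
        have "((\<lambda>t. - dlist xs f (y + t *\<^sub>R axis i 1))
               has_vector_derivative (- dlist (i#xs) f y)) (at 0)"
          by (intro has_vector_derivative_minus dk_line[OF assms(2) l' y])
        from line_transfer(1)[OF assms(1) y _ this, of "dlist xs (\<lambda>x. - f x)"]
        show "dlist (i # xs) (\<lambda>x. - f x) y = - dlist (i # xs) f y"
          using Cons l' by simp
      qed
    qed
  qed
  show "dk k U (\<lambda>x. - f x)" unfolding dk_def
  proof (intro allI impI ballI)
    fix "is" :: "'n list" and i x assume l: "length is < k" and x: "x \<in> U"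
    have "((\<lambda>t. - dlist is f (x + t *\<^sub>R axis i 1))
               has_vector_derivative (- dlist (i#is) f x)) (at 0)"
      by (intro has_vector_derivative_minus dk_line[OF assms(2) l x])
    from line_transfer(2)[OF assms(1) x _ this, of "dlist is (\<lambda>x. - f x)"]
    show "(\<lambda>t. dlist is (\<lambda>x. - f x) (x + t *\<^sub>R axis i 1)) differentiable at 0"
      using eq l by (auto intro: differentiableI_vector)
  qed
qed

fun splits :: "'a list \<Rightarrow> ('a list \<times> 'a list) list" where
  "splits [] = [([],[])]"
| "splits (i # xs) = map (\<lambda>(a,b). (a, i # b)) (splits xs) @ map (\<lambda>(a,b). (i # a, b)) (splits xs)"

lemma splits_len: "(a,b) \<in> set (splits xs) \<Longrightarrow> length a + length b = length xs"
  by (induction xs arbitrary: a b) auto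

lemma splits_subseq: "(a,b) \<in> set (splits xs) \<Longrightarrow> subseq a xs \<and> subseq b xs"
  by (induction xs arbitrary: a b) auto

lemma splits_head: "\<exists>r. splits xs = ([], xs) # r \<and> (\<forall>(a,b)\<in>set r. a \<noteq> [])"
proof (induction xs)
  case Nil then show ?case by simp
next
  case (Cons i xs)
  then obtain r where r: "splits xs = ([], xs) # r" "\<forall>(a,b)\<in>set r. a \<noteq> []" by blast
  show ?case
    by (rule exI[of _ "map (\<lambda>(a,b). (a, i # b)) r @ map (\<lambda>(a,b). (i # a, b)) (splits xs)"])
       (use r in auto)
qed

lemma splits_count:
  fixes c d :: "'b::comm_semiring_1"
  shows "sum_list (map (\<lambda>(a,b). c ^ length a * d ^ length b) (splits xs)) = (c + d) ^ length xs"
proof (induction xs)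
  case Nil then show ?case by simp
next
  case (Cons i xs)
  have "sum_list (map (\<lambda>(a,b). c ^ length a * d ^ length b) (splits (i # xs)))
     = sum_list (map (\<lambda>p. d * ((\<lambda>(a,b). c ^ length a * d ^ length b) p)) (splits xs))
       + sum_list (map (\<lambda>p. c * ((\<lambda>(a,b). c ^ length a * d ^ length b) p)) (splits xs))"
    by (simp add: comp_def case_prod_beta algebra_simps)
  also have "\<dots> = d * (c + d) ^ length xs + c * (c + d) ^ length xs"
    by (simp add: sum_list_const_mult Cons)
  also have "\<dots> = (c + d) ^ length (i # xs)" by (simp add: algebra_simps)
  finally show ?case .
qed

lemma has_vd_sum_list:
  assumes "\<forall>p\<in>set L. ((\<lambda>t. h p t) has_vector_derivative D p) F"
  shows "((\<lambda>t. sum_list (map (\<lambda>p. h p t) L)) has_vector_derivative sum_list (map D L)) F"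
  using assms
proof (induction L)
  case Nil then show ?case by (simp add: has_vector_derivative_const)
next
  case (Cons p L)
  then show ?case by (simp add: has_vector_derivative_add)
qed

lemma sum_list_pair_add:
  "sum_list (map (\<lambda>(a,b). u a b + v a b) L) = sum_list (map (\<lambda>(a,b). u a b) L) + sum_list (map (\<lambda>(a,b). v a b) L)"
  for u v :: "_ \<Rightarrow> _ \<Rightarrow> 'c::comm_monoid_add"
  by (induction L) (auto simp: algebra_simps)

lemma leibniz:
  fixes f g :: "real^'n::finite \<Rightarrow> 'b::real_normed_algebra"
  assumes "open U" "dk k U f" "dk k U g"
  shows "\<forall>xs. length xs \<le> k \<longrightarrow> (\<forall>y\<in>U. dlist xs (\<lambda>x. f x * g x) y =
            sum_list (map (\<lambda>(a,b). dlist a f y * dlist b g y) (splits xs)))"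
    and "dk k U (\<lambda>x. f x * g x)"
proof -
  have der: "((\<lambda>t. sum_list (map (\<lambda>p. (\<lambda>(a,b). dlist a f (y + t *\<^sub>R axis i 1) * dlist b g (y + t *\<^sub>R axis i 1)) p) (splits xs)))
        has_vector_derivative sum_list (map (\<lambda>(a,b). dlist a f y * dlist b g y) (splits (i # xs)))) (at 0)"
    if l: "length xs < k" and y: "y \<in> U" for xs i y
  proof -
    have "((\<lambda>t. sum_list (map (\<lambda>p. (\<lambda>(a,b). dlist a f (y + t *\<^sub>R axis i 1) * dlist b g (y + t *\<^sub>R axis i 1)) p) (splits xs)))
        has_vector_derivative sum_list (map (\<lambda>(a,b). dlist a f y * dlist (i # b) g y + dlist (i # a) f y * dlist b g y) (splits xs))) (at 0)"
    proof (rule has_vd_sum_list, intro ballI)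
      fix p assume p: "p \<in> set (splits xs)"
      obtain a b where ab: "p = (a,b)" by fastforce
      have la: "length a < k" and lb: "length b < k" using splits_len[of a b xs] p ab l by auto
      have "((\<lambda>t. dlist a f (y + t *\<^sub>R axis i 1) * dlist b g (y + t *\<^sub>R axis i 1)) has_vector_derivative
             (dlist a f (y + 0 *\<^sub>R axis i 1) * dlist (i # b) g y + dlist (i # a) f y * dlist b g (y + 0 *\<^sub>R axis i 1))) (at 0)"
        by (rule has_vector_derivative_mult[OF dk_line[OF assms(2) la y] dk_line[OF assms(3) lb y]])
      then show "((\<lambda>t. (\<lambda>(a,b). dlist a f (y + t *\<^sub>R axis i 1) * dlist b g (y + t *\<^sub>R axis i 1)) p) has_vector_derivative
             (\<lambda>(a,b). dlist a f y * dlist (i # b) g y + dlist (i # a) f y * dlist b g y) p) (at 0)"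
        using ab by simp
    qed
    moreover have "sum_list (map (\<lambda>(a,b). dlist a f y * dlist (i # b) g y + dlist (i # a) f y * dlist b g y) (splits xs))
        = sum_list (map (\<lambda>(a,b). dlist a f y * dlist b g y) (splits (i # xs)))"
      by (subst sum_list_pair_add) (simp add: comp_def split_def add.commute)
    ultimately show ?thesis by simp
  qed
  show eq: "\<forall>xs. length xs \<le> k \<longrightarrow> (\<forall>y\<in>U. dlist xs (\<lambda>x. f x * g x) y =
            sum_list (map (\<lambda>(a,b). dlist a f y * dlist b g y) (splits xs)))"
  proof (intro allI)
    fix xs :: "'n list"
    show "length xs \<le> k \<longrightarrow> (\<forall>y\<in>U. dlist xs (\<lambda>x. f x * g x) y =
            sum_list (map (\<lambda>(a,b). dlist a f y * dlist b g y) (splits xs)))"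
    proof (induction xs)
      case Nil then show ?case by simp
    next
      case (Cons i xs)
      show ?case
      proof (intro impI ballI)
        fix y assume l: "length (i # xs) \<le> k" and y: "y \<in> U"
        then have l': "length xs < k" by simp
        have e: "\<forall>z\<in>U. dlist xs (\<lambda>x. f x * g x) z = 
           sum_list (map (\<lambda>p. (\<lambda>(a,b). dlist a f z * dlist b g z) p) (splits xs))"
          using Cons l' by simp
        from line_transfer(1)[OF assms(1) y e der[OF l' y]]
        show "dlist (i # xs) (\<lambda>x. f x * g x) y = sum_list (map (\<lambda>(a,b). dlist a f y * dlist b g y) (splits (i # xs)))"
          by simp
      qed
    qed
  qed
  show "dk k U (\<lambda>x. f x * g x)" unfolding dk_def
  proof (intro allI impI ballI)
    fix "is" :: "'n list" and i x assume l: "length is < k" and x: "x \<in> U"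
    have e: "\<forall>z\<in>U. dlist is (\<lambda>x. f x * g x) z = 
           sum_list (map (\<lambda>p. (\<lambda>(a,b). dlist a f z * dlist b g z) p) (splits is))"
      using eq l by simp
    from line_transfer(2)[OF assms(1) x e der[OF l x]]
    show "(\<lambda>t. dlist is (\<lambda>x. f x * g x) (x + t *\<^sub>R axis i 1)) differentiable at 0"
      by (rule differentiableI_vector)
  qed
qed

lemma vd_iff_quot:
  fixes g :: "real \<Rightarrow> 'b::real_normed_vector"
  shows "(g has_vector_derivative D) (at 0) \<longleftrightarrow> ((\<lambda>t. (g t - g 0) /\<^sub>R t) \<longlongrightarrow> D) (at 0)"
proof -
  have bl: "bounded_linear (\<lambda>x::real. x *\<^sub>R D)" by (rule bounded_linear_scaleR_left)
  have nrm: "norm ((g y - g 0 - (y - 0) *\<^sub>R D) /\<^sub>R norm (y - 0)) = norm ((g y - g 0) /\<^sub>R y - D)"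
    if "y \<noteq> 0" for y :: real
  proof -
    have "(g y - g 0) /\<^sub>R y - D = (1 / y) *\<^sub>R (g y - g 0 - y *\<^sub>R D)"
      using that by (simp add: scaleR_diff_right inverse_eq_divide)
    then show ?thesis by (simp add: divide_inverse mult.commute)
  qed
  have ev: "eventually (\<lambda>y. norm ((g y - g 0 - (y - 0) *\<^sub>R D) /\<^sub>R norm (y - 0)) = norm ((g y - g 0) /\<^sub>R y - D)) (at (0::real))"
    using nrm by (auto simp: eventually_at_filter)
  have "(g has_vector_derivative D) (at 0) \<longleftrightarrow>
        ((\<lambda>y. (g y - g 0 - (y - 0) *\<^sub>R D) /\<^sub>R norm (y - 0)) \<longlongrightarrow> 0) (at 0)"
    unfolding has_vector_derivative_def has_derivative_at_within using bl by simp
  also have "\<dots> \<longleftrightarrow> ((\<lambda>y. norm ((g y - g 0 - (y - 0) *\<^sub>R D) /\<^sub>R norm (y - 0))) \<longlongrightarrow> 0) (at 0)"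
    by (rule tendsto_norm_zero_iff[symmetric])
  also have "\<dots> \<longleftrightarrow> ((\<lambda>y. norm ((g y - g 0) /\<^sub>R y - D)) \<longlongrightarrow> 0) (at 0)"
    by (rule tendsto_cong[OF ev])
  also have "\<dots> \<longleftrightarrow> ((\<lambda>y. (g y - g 0) /\<^sub>R y - D) \<longlongrightarrow> 0) (at 0)"
    by (rule tendsto_norm_zero_iff)
  also have "\<dots> \<longleftrightarrow> ((\<lambda>t. (g t - g 0) /\<^sub>R t) \<longlongrightarrow> D) (at 0)"
    by (rule Lim_null[symmetric])
  finally show ?thesis .
qed

lemma norm_mult3:
  fixes x y z :: "'a::real_normed_algebra"
  shows "norm (x * y * z) \<le> norm x * norm y * norm z"
proof -
  have "norm (x * y * z) \<le> norm (x * y) * norm z" by (rule norm_mult_ineq)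
  also have "\<dots> \<le> norm x * norm y * norm z" by (intro mult_right_mono norm_mult_ineq norm_ge_zero)
  finally show ?thesis .
qed

lemma inv_vd:
  fixes b :: "real \<Rightarrow> 'a::{real_normed_algebra, real_algebra_1}"
  assumes bd: "(b has_vector_derivative b') (at 0)"
    and inv: "eventually (\<lambda>t. invertible_elem (b t)) (nhds 0)"
  shows "((\<lambda>t. ainv (b t)) has_vector_derivative - (ainv (b 0) * b' * ainv (b 0))) (at 0)"
proof -
  define F where "F t = ainv (b t)" for t
  define F0 where "F0 = F 0"
  have inv0: "invertible_elem (b 0)" using eventually_nhds_x_imp_x[OF inv] .
  have invat: "eventually (\<lambda>t. invertible_elem (b t)) (at 0)"
    using inv by (simp add: eventually_at_filter eventually_mono)
  have ident: "F t - F0 = - (F t * (b t - b 0) * F0)" if "invertible_elem (b t)" for t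
  proof -
    have "F t * (b t - b 0) * F0 = F t * b t * F0 - F t * (b 0 * F0)"
      by (simp add: algebra_simps)
    also have "\<dots> = F0 - F t"
      using ainv_props[OF that] ainv_props[OF inv0] unfolding F_def F0_def by simp
    finally show ?thesis by simp
  qed
  have bcont: "(b \<longlongrightarrow> b 0) (at 0)"
    using has_vector_derivative_continuous[OF bd] by (simp add: continuous_within)
  then have bc0: "((\<lambda>t. b t - b 0) \<longlongrightarrow> 0) (at 0)" using Lim_null by blast
  then have "((\<lambda>t. norm (b t - b 0) * norm F0) \<longlongrightarrow> 0 * norm F0) (at 0)"
    by (intro tendsto_mult tendsto_const tendsto_norm_zero)
  then have "eventually (\<lambda>t. norm (b t - b 0) * norm F0 < 1/2) (at 0)"
    by (intro order_tendstoD) auto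
  then have evb: "eventually (\<lambda>t. norm (F t) \<le> 2 * norm F0) (at 0)"
    using invat
  proof eventually_elim
    case (elim t)
    let ?N = "norm (F t)" and ?q = "norm (b t - b 0) * norm F0"
    have P: "F t * (b t - b 0) * F0 = F0 - F t" using ident[OF elim(2)] by (metis minus_diff_eq minus_minus)
    have "norm (F t) = norm (F0 - F t * (b t - b 0) * F0)"
      unfolding P by simp
    also have "\<dots> \<le> norm F0 + norm (F t * (b t - b 0) * F0)" by (rule norm_triangle_ineq4)
    also have "norm (F t * (b t - b 0) * F0) \<le> ?N * ?q"
      using norm_mult3[of "F t" "b t - b 0" F0] by (simp add: mult.assoc)
    finally have "?N \<le> norm F0 + ?N * ?q" by simp
    moreover have "?N * ?q \<le> ?N * (1/2)" using elim(1) by (intro mult_left_mono) auto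
    ultimately show ?case by simp
  qed
  have "((\<lambda>t. F t - F0) \<longlongrightarrow> 0) (at 0)"
  proof (rule Lim_null_comparison)
    show "eventually (\<lambda>t. norm (F t - F0) \<le> 2 * norm F0 * norm F0 * norm (b t - b 0)) (at 0)"
      using evb invat
    proof eventually_elim
      case (elim t)
      have "norm (F t - F0) = norm (F t * (b t - b 0) * F0)" using ident[OF elim(2)] by simp
      also have "\<dots> \<le> norm (F t) * norm (b t - b 0) * norm F0"
        by (rule norm_mult3)
      also have "\<dots> \<le> 2 * norm F0 * norm (b t - b 0) * norm F0"
        using elim(1) by (intro mult_right_mono) auto
      finally show ?case by (simp add: algebra_simps)
    qed
    show "((\<lambda>t. 2 * norm F0 * norm F0 * norm (b t - b 0)) \<longlongrightarrow> 0) (at 0)"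
      using tendsto_mult[OF tendsto_const tendsto_norm_zero[OF bc0], of "2 * norm F0 * norm F0"] by simp
  qed
  then have Fc: "(F \<longlongrightarrow> F0) (at 0)" using Lim_null by blast
  have bq: "((\<lambda>t. (b t - b 0) /\<^sub>R t) \<longlongrightarrow> b') (at 0)" using bd vd_iff_quot by blast
  have "((\<lambda>t. - (F t * ((b t - b 0) /\<^sub>R t) * F0)) \<longlongrightarrow> - (F0 * b' * F0)) (at 0)"
    by (intro tendsto_minus tendsto_mult Fc bq tendsto_const)
  moreover have "eventually (\<lambda>t. - (F t * ((b t - b 0) /\<^sub>R t) * F0) = (F t - F 0) /\<^sub>R t) (at 0)"
    using invat
  proof eventually_elim
    case (elim t)
    show ?case using ident[OF elim] unfolding F0_def by (simp add: mult_scaleR_left mult_scaleR_right)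
  qed
  ultimately have "((\<lambda>t. (F t - F 0) /\<^sub>R t) \<longlongrightarrow> - (F0 * b' * F0)) (at 0)"
    by (rule Lim_transform_eventually)
  then have "((\<lambda>t. (ainv (b t) - ainv (b 0)) /\<^sub>R t) \<longlongrightarrow> - (ainv (b 0) * b' * ainv (b 0))) (at 0)"
    unfolding F_def F0_def by simp
  then show ?thesis using vd_iff_quot[of "\<lambda>t. ainv (b t)"] by simp
qed

lemma dk_inverse:
  fixes B :: "real^'n::finite \<Rightarrow> 'a::{real_normed_algebra, real_algebra_1}"
  assumes "open U" "\<forall>x\<in>U. invertible_elem (B x)"
  shows "dk k U B \<Longrightarrow> dk k U (\<lambda>x. ainv (B x))"
proof (induction k)
  case 0 then show ?case by (simp add: dk_def)
next
  case (Suc k)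
  have dB: "\<forall>i. \<forall>x\<in>U. (\<lambda>t. B (x + t *\<^sub>R axis i 1)) differentiable (at 0)"
    and dBj: "\<And>j. dk k U (partial_i j B)" using Suc.prems dk_Suc by blast+
  have IH: "dk k U (\<lambda>x. ainv (B x))" using Suc.IH Suc.prems dk_mono by fastforce
  have lineF: "((\<lambda>t. ainv (B (x + t *\<^sub>R axis i 1))) has_vector_derivative
        - (ainv (B x) * partial_i i B x * ainv (B x))) (at 0)" if x: "x \<in> U" for x i
  proof -
    have "((\<lambda>t. B (x + t *\<^sub>R axis i 1)) has_vector_derivative partial_i i B x) (at 0)"
      using dB x unfolding vector_derivative_works partial_i_def by blast
    moreover have "eventually (\<lambda>t. invertible_elem (B (x + t *\<^sub>R axis i 1))) (nhds 0)"
      using ev_line[OF assms(1) x, of i] assms(2) by (auto elim: eventually_mono)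
    ultimately show ?thesis using inv_vd[of "\<lambda>t. B (x + t *\<^sub>R axis i 1)"] by simp
  qed
  have "dk k U (partial_i j (\<lambda>x. ainv (B x)))" for j
  proof -
    have "dk k U (\<lambda>x. ainv (B x) * partial_i j B x)" using leibniz(2)[OF assms(1) IH dBj] .
    then have "dk k U (\<lambda>x. ainv (B x) * partial_i j B x * ainv (B x))"
      using leibniz(2)[OF assms(1) _ IH] by blast
    then have d: "dk k U (\<lambda>x. - (ainv (B x) * partial_i j B x * ainv (B x)))"
      using dk_minus(2)[OF assms(1)] by blast
    have "\<forall>z\<in>U. - (ainv (B z) * partial_i j B z * ainv (B z)) = partial_i j (\<lambda>x. ainv (B x)) z"
    proof
      fix z assume z: "z \<in> U"
      show "- (ainv (B z) * partial_i j B z * ainv (B z)) = partial_i j (\<lambda>x. ainv (B x)) z"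
        unfolding partial_i_def[of j "\<lambda>x. ainv (B x)"] using vector_derivative_at[OF lineF[OF z, of j]] by simp
    qed
    then show ?thesis using dk_local[OF assms(1) _ d] by blast
  qed
  moreover have "\<forall>i. \<forall>x\<in>U. (\<lambda>t. ainv (B (x + t *\<^sub>R axis i 1))) differentiable (at 0)"
    using lineF differentiableI_vector by blast
  ultimately show ?case using dk_Suc by blast
qed

definition Lb :: "('n::finite \<Rightarrow> nat) \<Rightarrow> 'n list" where
  "Lb \<beta> = concat (map (\<lambda>i. replicate (\<beta> i) i) coord_list)"

lemma mpartial_Lb: "mpartial \<beta> f = dlist (Lb \<beta>) f"
  by (simp add: mpartial_def Lb_def)

lemma coord_list_props: "distinct (coord_list::'n::finite list) \<and> set (coord_list::'n list) = UNIV"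
  unfolding coord_list_def
  apply (rule someI_ex) 
  using finite_distinct_list[of "UNIV::'n set"] 
  apply auto
  done
lemma coord_distinct: "distinct (coord_list::'n::finite list)" using coord_list_props by blast
lemma coord_set: "set (coord_list::'n::finite list) = UNIV" using coord_list_props by blast
lemma length_Lb: "length (Lb \<beta>) = mi_order \<beta>"
proof -
  have "length (Lb \<beta>) = sum_list (map \<beta> coord_list)"
    unfolding Lb_def by (simp add: length_concat comp_def)
  also have "\<dots> = sum \<beta> (set coord_list)"
    using coord_distinct sum_list_distinct_conv_sum_set by blast
  also have "\<dots> = mi_order \<beta>" by (simp add: mi_order_def coord_set)
  finally show ?thesis .
qed

lemma Lb_zero: "Lb (\<lambda>_. 0) = []"
  by (simp add: Lb_def)

lemma mi_order_zero: "mi_order (\<lambda>_. 0) = 0"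
  by (simp add: mi_order_def)

lemma subseq_replicate: "subseq ys (replicate k a) \<Longrightarrow> ys = replicate (length ys) a"
proof -
  assume h: "subseq ys (replicate k a)"
  have "\<forall>y\<in>set ys. y = a"
  proof
    fix y assume "y \<in> set ys"
    from list_emb_set[OF h this] show "y = a" by (metis in_set_replicate)
  qed
  then show ?thesis using replicate_length_same by metis
qed

lemma subseq_blocks:
  assumes "distinct cl" "subseq ys (concat (map (\<lambda>i. replicate (\<beta> i) i) cl))"
  shows "\<exists>\<gamma>. ys = concat (map (\<lambda>i. replicate (\<gamma> i) i) cl)"
  using assms
proof (induction cl arbitrary: ys)
  case Nil then show ?case by simp
next
  case (Cons a cl)
  from Cons.prems(2) have "subseq ys (replicate (\<beta> a) a @ concat (map (\<lambda>i. replicate (\<beta> i) i) cl))" by simp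
  then obtain y1 y2 where y: "ys = y1 @ y2" "subseq y1 (replicate (\<beta> a) a)"
      "subseq y2 (concat (map (\<lambda>i. replicate (\<beta> i) i) cl))"
    by (rule subseq_appendE)
  obtain \<gamma> where g: "y2 = concat (map (\<lambda>i. replicate (\<gamma> i) i) cl)"
    using Cons.IH[OF _ y(3)] Cons.prems(1) by auto
  have a: "a \<notin> set cl" using Cons.prems(1) by simp
  have eqm: "map (\<lambda>i. replicate ((\<gamma>(a := length y1)) i) i) cl = map (\<lambda>i. replicate (\<gamma> i) i) cl"
    using a by (intro map_cong) auto
  have "concat (map (\<lambda>i. replicate ((\<gamma>(a := length y1)) i) i) (a # cl))
      = replicate (length y1) a @ concat (map (\<lambda>i. replicate (\<gamma> i) i) cl)"
    by (simp only: list.map(2) concat.simps(2) eqm fun_upd_same)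
  then have "ys = concat (map (\<lambda>i. replicate ((\<gamma>(a := length y1)) i) i) (a # cl))"
    using y(1) subseq_replicate[OF y(2)] g by simp
  then show ?case by blast
qed

definition good :: "'n::finite list \<Rightarrow> bool" where
  "good xs \<longleftrightarrow> (\<exists>\<beta>. xs = Lb \<beta>)"

lemma good_subseq: "good xs \<Longrightarrow> subseq ys xs \<Longrightarrow> good ys"
  unfolding good_def Lb_def using subseq_blocks coord_distinct by blast

lemma good_splits: "good xs \<Longrightarrow> (a,b) \<in> set (splits xs) \<Longrightarrow> good a \<and> good b"
  using splits_subseq good_subseq by blast

lemma norm_sum_list_le:
  fixes f :: "'x \<Rightarrow> 'b::real_normed_vector"
  shows "norm (sum_list (map f L)) \<le> sum_list (map (\<lambda>x. norm (f x)) L)"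
proof (induction L)
  case Nil then show ?case by simp
next
  case (Cons a L)
  then show ?case using norm_triangle_ineq[of "f a" "sum_list (map f L)"] by simp
qed

lemma invertible_mult:
  fixes a b :: "'a::ring_1"
  assumes "invertible_elem a" "invertible_elem b"
  shows "invertible_elem (a * b)"
proof -
  obtain a' where a: "a * a' = 1" "a' * a = 1" using assms(1) unfolding invertible_elem_def by blast
  obtain b' where b: "b * b' = 1" "b' * b = 1" using assms(2) unfolding invertible_elem_def by blast
  have "a * b * (b' * a') = 1" by (metis a(1) b(1) mult.assoc mult_1_left)
  moreover have "b' * a' * (a * b) = 1" by (metis a(2) b(2) mult.assoc mult_1_left)
  ultimately show ?thesis unfolding invertible_elem_def by blast
qed

lemma real_arith1:
  fixes N a b :: real
  assumes "N \<le> a + N / 2 + b"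
  shows "N \<le> 2 * a + 2 * b"
  using assms by linarith

theorem proposition24:
  fixes A X :: "real^'n::finite \<Rightarrow> 'a::{real_normed_algebra, real_algebra_1, banach}"
    and U :: "(real^'n) set"
    and s :: nat and \<epsilon> M C :: real
  assumes "open U"
    and "Cs_on s U A" and "Cs_on s U X"
    and "\<forall>l\<in>U. invertible_elem (A l)"
    and "\<epsilon> > 0" and "M \<ge> 1" and "C \<ge> 1"
    and "\<forall>l\<in>U. \<forall>\<beta>. mi_order \<beta> \<le> s \<longrightarrow>
           norm (mpartial \<beta> (\<lambda>x. ainv (A x)) l) \<le> M * C ^ mi_order \<beta>"
    and "\<forall>l\<in>U. \<forall>\<beta>. mi_order \<beta> \<le> s \<longrightarrow>
           norm (mpartial \<beta> X l) \<le> \<epsilon> * C ^ mi_order \<beta>"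
    and "\<epsilon> * M \<le> 1 / 2"
  shows "\<forall>l\<in>U. invertible_elem (A l + X l) \<and>
           (\<forall>\<beta>. mi_order \<beta> \<le> s \<longrightarrow>
              norm (mpartial \<beta> (\<lambda>x. ainv (A x + X x)) l)
                \<le> 2 * (\<Sum>k=1..mi_order \<beta> + 1. real k ^ mi_order \<beta> * norm (1::'a) ^ k)
                    * M * (2 * C) ^ mi_order \<beta>)"
proof -
  note oU = assms(1)
  define G where "G x = ainv (A x)" for x
  define F where "F x = ainv (A x + X x)" for x
  define K where "K = 2 * C"
  have dA: "dk s U A" using assms(2) unfolding Cs_on_def dk_def by blast
  have dX: "dk s U X" using assms(3) unfolding Cs_on_def dk_def by blast
  have dG: "dk s U G" unfolding G_def by (rule dk_inverse[OF oU assms(4) dA])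
  have hG: "norm (dlist a G y) \<le> M * C ^ length a" if ga: "good a" "length a \<le> s" "y \<in> U" for a y
  proof -
    obtain \<beta> where b: "a = Lb \<beta>" using ga(1) unfolding good_def by blast
    show ?thesis using assms(8) ga(2,3) unfolding b G_def mpartial_Lb length_Lb by blast
  qed
  have hX: "norm (dlist a X y) \<le> \<epsilon> * C ^ length a" if ga: "good a" "length a \<le> s" "y \<in> U" for a y
  proof -
    obtain \<beta> where b: "a = Lb \<beta>" using ga(1) unfolding good_def by blast
    show ?thesis using assms(9) ga(2,3) unfolding b mpartial_Lb length_Lb by blast
  qed
  have good0: "good []" unfolding good_def using Lb_zero by metis
  have nG: "norm (G y) \<le> M" if "y \<in> U" for y using hG[OF good0 _ that] by simp
  have nX: "norm (X y) \<le> \<epsilon>" if "y \<in> U" for y using hX[OF good0 _ that] by simp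
  have nGX: "norm (G y * X y) \<le> 1/2" if "y \<in> U" for y
  proof -
    have "norm (G y * X y) \<le> norm (G y) * norm (X y)" by (rule norm_mult_ineq)
    also have "\<dots> \<le> M * \<epsilon>" using nG[OF that] nX[OF that] assms(5,6)
      by (intro mult_mono) auto
    finally show ?thesis using assms(10) by (simp add: mult.commute)
  qed
  have invAX: "invertible_elem (A y + X y)" if y: "y \<in> U" for y
  proof -
    have AG: "A y * G y = 1" using ainv_props[OF assms(4)[rule_format, OF y]] unfolding G_def by simp
    have "A y + X y = A y * (1 + G y * X y)"
      by (simp add: algebra_simps AG flip: mult.assoc)
    moreover have "invertible_elem (1 + G y * X y)"
      using nGX[OF y] by (intro neumann_invertible) simp
    ultimately show ?thesis using invertible_mult assms(4) y by metis
  qed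
  have dAX: "dk s U (\<lambda>x. A x + X x)" using dk_add(2)[OF oU dA dX] .
  have dF: "dk s U F" unfolding F_def by (rule dk_inverse[OF oU _ dAX]) (use invAX in blast)
  have dGX: "dk s U (\<lambda>x. G x * X x)" using leibniz(2)[OF oU dG dX] .
  have dGXF: "dk s U (\<lambda>x. G x * X x * F x)" using leibniz(2)[OF oU dGX dF] .
  have eqU: "\<forall>z\<in>U. F z + G z * X z * F z = G z"
  proof
    fix z assume z: "z \<in> U"
    have GA: "G z * A z = 1" using ainv_props[OF assms(4)[rule_format, OF z]] unfolding G_def by simp
    have AF: "(A z + X z) * F z = 1" using ainv_props[OF invAX[OF z]] unfolding F_def by simp
    have "G z = G z * ((A z + X z) * F z)" using AF by simp
    also have "\<dots> = (G z * A z) * F z + G z * X z * F z" by (simp add: algebra_simps)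
    also have "\<dots> = F z + G z * X z * F z" using GA by simp
    finally show "F z + G z * X z * F z = G z" by simp
  qed
  have E: "dlist xs F y = dlist xs G y - dlist xs (\<lambda>x. G x * X x * F x) y"
    if "length xs \<le> s" "y \<in> U" for xs y
  proof -
    have "dlist xs (\<lambda>x. F x + G x * X x * F x) y = dlist xs F y + dlist xs (\<lambda>x. G x * X x * F x) y"
      using dk_add(1)[OF oU dF dGXF] that by blast
    moreover have "dlist xs (\<lambda>x. F x + G x * X x * F x) y = dlist xs G y"
      using dlist_local[OF oU, of "\<lambda>x. F x + G x * X x * F x" G xs] eqU that(2) by blast
    ultimately show ?thesis by (simp add: algebra_simps)
  qed
  have L1: "dlist xs (\<lambda>x. G x * X x * F x) y = sum_list (map (\<lambda>(a,b). dlist a (\<lambda>x. G x * X x) y * dlist b F y) (splits xs))"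
    if "length xs \<le> s" "y \<in> U" for xs y
    using leibniz(1)[OF oU dGX dF] that by blast
  have L2: "dlist xs (\<lambda>x. G x * X x) y = sum_list (map (\<lambda>(a,b). dlist a G y * dlist b X y) (splits xs))"
    if "length xs \<le> s" "y \<in> U" for xs y
    using leibniz(1)[OF oU dG dX] that by blast
  have hGX: "norm (dlist a (\<lambda>x. G x * X x) y) \<le> \<epsilon> * M * K ^ length a"
    if a: "good a" "length a \<le> s" "y \<in> U" for a y
  proof -
    have "norm (dlist a (\<lambda>x. G x * X x) y)
        \<le> sum_list (map (\<lambda>p. norm ((\<lambda>(c,d). dlist c G y * dlist d X y) p)) (splits a))"
      unfolding L2[OF a(2,3)] by (rule norm_sum_list_le)
    also have "\<dots> \<le> sum_list (map (\<lambda>p. (\<epsilon> * M) * ((\<lambda>(c,d). C ^ length c * C ^ length d) p)) (splits a))"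
    proof (rule sum_list_mono)
      fix p assume p: "p \<in> set (splits a)"
      obtain c d where cd: "p = (c,d)" by fastforce
      have gc: "good c" "good d" using good_splits[OF a(1)] p cd by auto
      have lc: "length c \<le> s" "length d \<le> s" using splits_len[of c d a] p cd a(2) by auto
      have "norm (dlist c G y * dlist d X y) \<le> norm (dlist c G y) * norm (dlist d X y)"
        by (rule norm_mult_ineq)
      also have "\<dots> \<le> (M * C ^ length c) * (\<epsilon> * C ^ length d)"
        using hG[OF gc(1) lc(1) a(3)] hX[OF gc(2) lc(2) a(3)] assms(6,7)
        by (intro mult_mono) auto
      finally show "norm ((\<lambda>(c,d). dlist c G y * dlist d X y) p)
          \<le> (\<epsilon> * M) * ((\<lambda>(c,d). C ^ length c * C ^ length d) p)"
        using cd by (simp add: algebra_simps)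
    qed
    also have "\<dots> = (\<epsilon> * M) * (C + C) ^ length a"
      by (simp only: sum_list_const_mult splits_count)
    also have "C + C = K" by (simp add: K_def)
    finally show ?thesis by simp
  qed
  have main: "\<forall>xs. good xs \<longrightarrow> length xs = n \<longrightarrow> n \<le> s \<longrightarrow>
        (\<forall>y\<in>U. norm (dlist xs F y) \<le> 2 * (real n + 1) ^ n * M * K ^ n)" for n
  proof (induction n rule: less_induct)
    case (less n)
    show ?case
    proof (intro allI impI ballI)
      fix xs :: "'n list" and y assume gx: "good xs" and ln: "length xs = n" and ns: "n \<le> s" and y: "y \<in> U"
      have lxs: "length xs \<le> s" using ln ns by simp
      obtain r where r: "splits xs = ([],xs) # r" "\<forall>(a,b)\<in>set r. a \<noteq> []"
        using splits_head by blast
      define N where "N = norm (dlist xs F y)"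
      have Kpos: "K \<ge> 0" "C \<le> K" using assms(7) unfolding K_def by auto
      have T: "dlist xs (\<lambda>x. G x * X x * F x) y = (G y * X y) * dlist xs F y
          + sum_list (map (\<lambda>(a,b). dlist a (\<lambda>x. G x * X x) y * dlist b F y) r)"
        using L1[OF lxs y] r(1) by simp
      have tb: "norm ((\<lambda>(a,b). dlist a (\<lambda>x. G x * X x) y * dlist b F y) p)
            \<le> M * K ^ n * ((\<lambda>(a,b). 1 ^ length a * real n ^ length b) p)" if p: "p \<in> set r" for p
      proof -
        obtain a b where ab: "p = (a,b)" by fastforce
        have ps: "(a,b) \<in> set (splits xs)" using p ab r(1) by simp
        have gab: "good a" "good b" using good_splits[OF gx ps] by auto
        have len: "length a + length b = n" using splits_len[OF ps] ln by simp
        have an: "a \<noteq> []" using r(2) p ab by auto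
        then have bn: "length b < n" using len by (cases a) auto
        have las: "length a \<le> s" "length b \<le> s" using len ns by auto
        have IHb: "norm (dlist b F y) \<le> 2 * (real (length b) + 1) ^ length b * M * K ^ length b"
          using less.IH[OF bn] gab(2) las(2) y by blast
        have pw: "(real (length b) + 1) ^ length b \<le> real n ^ length b"
          using bn by (intro power_mono) auto
        have h1: "norm (dlist a (\<lambda>x. G x * X x) y) \<le> 1/2 * K ^ length a"
        proof -
          have "norm (dlist a (\<lambda>x. G x * X x) y) \<le> \<epsilon> * M * K ^ length a" using hGX[OF gab(1) las(1) y] .
          also have "\<dots> \<le> 1/2 * K ^ length a" using assms(10) Kpos by (intro mult_right_mono) auto
          finally show ?thesis .
        qed
        have h2: "norm (dlist b F y) \<le> 2 * real n ^ length b * M * K ^ length b"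
        proof -
          have "2 * (real (length b) + 1) ^ length b * M * K ^ length b \<le> 2 * real n ^ length b * M * K ^ length b"
            using pw assms(6) Kpos by (intro mult_right_mono) auto
          then show ?thesis using IHb by linarith
        qed
        have "norm (dlist a (\<lambda>x. G x * X x) y * dlist b F y)
            \<le> norm (dlist a (\<lambda>x. G x * X x) y) * norm (dlist b F y)" by (rule norm_mult_ineq)
        also have "\<dots> \<le> (1/2 * K ^ length a) * (2 * real n ^ length b * M * K ^ length b)"
          using h1 h2 Kpos by (intro mult_mono) auto
        also have "\<dots> = M * (K ^ length a * K ^ length b) * real n ^ length b" by (simp add: algebra_simps)
        also have "\<dots> = M * K ^ n * real n ^ length b" using len by (simp add: power_add[symmetric])
        finally show ?thesis using ab by simp
      qed
      have cnt: "sum_list (map (\<lambda>(a,b). (1::real) ^ length a * real n ^ length b) r) = (1 + real n) ^ n - real n ^ n"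
        using splits_count[of "1::real" "real n" xs] r(1) ln by simp
      have R: "norm (sum_list (map (\<lambda>(a,b). dlist a (\<lambda>x. G x * X x) y * dlist b F y) r))
           \<le> M * K ^ n * ((1 + real n) ^ n - real n ^ n)"
      proof -
        have "norm (sum_list (map (\<lambda>(a,b). dlist a (\<lambda>x. G x * X x) y * dlist b F y) r))
            \<le> sum_list (map (\<lambda>p. norm ((\<lambda>(a,b). dlist a (\<lambda>x. G x * X x) y * dlist b F y) p)) r)"
          by (rule norm_sum_list_le)
        also have "\<dots> \<le> sum_list (map (\<lambda>p. M * K ^ n * ((\<lambda>(a,b). 1 ^ length a * real n ^ length b) p)) r)"
          by (rule sum_list_mono) (rule tb)
        also have "\<dots> = M * K ^ n * ((1 + real n) ^ n - real n ^ n)"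
          by (simp only: sum_list_const_mult cnt)
        finally show ?thesis .
      qed
      have h0: "norm ((G y * X y) * dlist xs F y) \<le> N / 2"
      proof -
        have "norm ((G y * X y) * dlist xs F y) \<le> norm (G y * X y) * N" unfolding N_def by (rule norm_mult_ineq)
        also have "\<dots> \<le> 1/2 * N" using nGX[OF y] unfolding N_def by (intro mult_right_mono) auto
        finally show ?thesis by simp
      qed
      have hGxs: "norm (dlist xs G y) \<le> M * C ^ n" using hG[OF gx lxs y] ln by simp
      have "N = norm (dlist xs G y - ((G y * X y) * dlist xs F y
          + sum_list (map (\<lambda>(a,b). dlist a (\<lambda>x. G x * X x) y * dlist b F y) r)))"
        unfolding N_def using E[OF lxs y] T by simp
      also have "\<dots> \<le> norm (dlist xs G y) + (norm ((G y * X y) * dlist xs F y)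
          + norm (sum_list (map (\<lambda>(a,b). dlist a (\<lambda>x. G x * X x) y * dlist b F y) r)))"
        using norm_triangle_ineq4[of "dlist xs G y" "(G y * X y) * dlist xs F y
          + sum_list (map (\<lambda>(a,b). dlist a (\<lambda>x. G x * X x) y * dlist b F y) r)"]
          norm_triangle_ineq[of "(G y * X y) * dlist xs F y"
          "sum_list (map (\<lambda>(a,b). dlist a (\<lambda>x. G x * X x) y * dlist b F y) r)"] by linarith
      also have "\<dots> \<le> M * C ^ n + (N / 2 + M * K ^ n * ((1 + real n) ^ n - real n ^ n))"
        using hGxs h0 R by linarith
      finally have "N \<le> M * C ^ n + N / 2 + M * K ^ n * ((1 + real n) ^ n - real n ^ n)" by simp
      then have N1: "N \<le> 2 * (M * C ^ n) + 2 * (M * K ^ n * ((1 + real n) ^ n - real n ^ n))"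
        by (rule real_arith1)
      have nn: "real n ^ n \<ge> 1"
        by (cases "n = 0") (auto intro: one_le_power)
      have CK: "M * C ^ n \<le> M * K ^ n * real n ^ n"
      proof -
        have "M * C ^ n \<le> M * K ^ n" using Kpos assms(6,7) by (intro mult_left_mono power_mono) auto
        also have "\<dots> \<le> M * K ^ n * real n ^ n"
        proof -
          have "0 \<le> M * K ^ n" using assms(6) Kpos by simp
          then have "M * K ^ n * 1 \<le> M * K ^ n * real n ^ n" by (rule mult_left_mono[OF nn])
          then show ?thesis by simp
        qed
        finally show ?thesis .
      qed
      have "2 * (M * C ^ n) + 2 * (M * K ^ n * ((1 + real n) ^ n - real n ^ n)) \<le> 2 * (real n + 1) ^ n * M * K ^ n"
        using CK by (simp add: algebra_simps)
      then show "norm (dlist xs F y) \<le> 2 * (real n + 1) ^ n * M * K ^ n"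
        using N1 unfolding N_def by linarith
    qed
  qed
  have Fe: "(\<lambda>x. ainv (A x + X x)) = F" by (simp add: F_def fun_eq_iff)
  show ?thesis
  proof (intro ballI conjI allI impI)
    fix l assume l: "l \<in> U"
    show "invertible_elem (A l + X l)" using invAX[OF l] .
    fix \<beta> :: "'n \<Rightarrow> nat" assume bs: "mi_order \<beta> \<le> s"
    define n where "n = mi_order \<beta>"
    have gb: "good (Lb \<beta>)" unfolding good_def by blast
    have bnd: "norm (mpartial \<beta> (\<lambda>x. ainv (A x + X x)) l) \<le> 2 * (real n + 1) ^ n * M * K ^ n"
      unfolding Fe mpartial_Lb using main[of n] gb bs l length_Lb[of \<beta>] unfolding n_def by blast
    have Kpos: "K \<ge> 0" using assms(7) unfolding K_def by auto
    have Sge: "(\<Sum>k=1..n + 1. real k ^ n * norm (1::'a) ^ k) \<ge> 0" by (intro sum_nonneg) auto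
    show "norm (mpartial \<beta> (\<lambda>x. ainv (A x + X x)) l)
        \<le> 2 * (\<Sum>k=1..mi_order \<beta> + 1. real k ^ mi_order \<beta> * norm (1::'a) ^ k) * M * (2 * C) ^ mi_order \<beta>"
    proof (cases "(1::'a) = 0")
      case True
      have "z = 0" for z :: 'a
      proof -
        have "z = z * 1" by simp
        also have "\<dots> = 0" using True by simp
        finally show ?thesis .
      qed
      then have "norm (mpartial \<beta> (\<lambda>x. ainv (A x + X x)) l) = 0" by simp
      moreover have "0 \<le> 2 * (\<Sum>k=1..n + 1. real k ^ n * norm (1::'a) ^ k) * M * K ^ n"
        using Sge assms(6) Kpos by simp
      ultimately show ?thesis unfolding n_def K_def by simp
    next
      case False
      have "norm (1::'a) = norm ((1::'a) * 1)" by simp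
      also have "\<dots> \<le> norm (1::'a) * norm (1::'a)" by (rule norm_mult_ineq)
      finally have n1: "norm (1::'a) \<ge> 1" using False by simp
      have "(real n + 1) ^ n = real (n + 1) ^ n * 1" by (simp add: add.commute)
      also have "\<dots> \<le> real (n + 1) ^ n * norm (1::'a) ^ (n + 1)"
        using n1 by (intro mult_left_mono one_le_power) auto
      also have "\<dots> \<le> (\<Sum>k=1..n + 1. real k ^ n * norm (1::'a) ^ k)"
        by (rule member_le_sum[of "n+1" "{1..n+1}" "\<lambda>k. real k ^ n * norm (1::'a) ^ k"]) auto
      finally have "(real n + 1) ^ n \<le> (\<Sum>k=1..n + 1. real k ^ n * norm (1::'a) ^ k)" .
      then have "2 * (real n + 1) ^ n * M * K ^ n \<le> 2 * (\<Sum>k=1..n + 1. real k ^ n * norm (1::'a) ^ k) * M * K ^ n"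
        using assms(6) Kpos by (intro mult_right_mono) auto
      then show ?thesis using bnd unfolding n_def K_def by linarith
    qed
  qed
qed

end
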